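(* Let $\Gamma=(\mathcal{G},\mathcal{I},\boldsymbol{c})$ be a nonatomic routing game with BPR-type cost functions, i.e., there is $\beta\in\mathbb{R}_+$ such that $c_e(x)=t_e+a_ex^{\beta}$ with $t_e,a_e\in\mathbb{R}_+$ for every edge $e$, and suppose $\mathcal{G}$ is a directed acyclic multigraph. Then there exists a non-negative demand-independent optimal toll (DIOT) $\boldsymbol{\tau}\in\mathbb{R}_+^{\mathcal{E}}$ for $\Gamma$.
   Context: A nonatomic routing game $\Gamma=(\mathcal{G},\mathcal{I},\boldsymbol{c})$ consists of a finite directed multigraph $\mathcal{G}=(\mathcal{V},\mathcal{E})$, a finite set $\mathcal{I}$ of origin-destination pairs $i$ with origin $o^i$ and destination $d^i$, and nondecreasing continuous cost functions $c_e:\mathbb{R}_+\to\mathbb{R}_+$. $\mathcal{P}^i$ is the set of simple $o^i$–$d^i$ paths. For a demand vector $\boldsymbol{\mu}\in\mathbb{R}_+^{\mathcal{I}}$, feasible flows are $\boldsymbol{f}\in\mathbb{R}_+^{\mathcal{P}}$ with $\sum_{p\in\mathcal{P}^i}f_p=\mu^i$; loads $x_e=\sum_{p\ni e}f_p$; path costs $c_p=\sum_{e\in p}c_e(x_e)$. A Wardrop equilibrium is a feasible flow where every used path of each pair $i$ has cost at most that of any other path in $\mathcal{P}^i$. The total cost is $L(\boldsymbol{f})=\sum_p f_pc_p(\boldsymbol{f})$; a system optimum minimizes $L$ over feasible flows. For a toll vector $\boldsymbol{\tau}\in\mathbb{R}^{\mathcal{E}}$, $\Gamma^{\boldsymbol{\tau}}$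 has edge costs $c_e(x)+\tau_e$. $\boldsymbol{\tau}$ is a DIOT for $\Gamma$ if for every demand vector $\boldsymbol{\mu}\in\mathbb{R}_+^{\mathcal{I}}$ every Wardrop equilibrium of $\Gamma^{\boldsymbol{\tau}}$ with demand $\boldsymbol{\mu}$ is a system optimum of $\Gamma$ for demand $\boldsymbol{\mu}$. *)

theory Defs
  imports Complex_Main
begin

text \<open>A directed multigraph is given by a set of edges E (of an arbitrary type 'e,
  so parallel edges are allowed) together with tail (src) and head (trg) maps.\<close>

fun walk :: "'e set \<Rightarrow> ('e \<Rightarrow> 'v) \<Rightarrow> ('e \<Rightarrow> 'v) \<Rightarrow> 'v \<Rightarrow> 'e list \<Rightarrow> 'v \<Rightarrow> bool" where
  "walk E src trg u [] v \<longleftrightarrow> u = v"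
| "walk E src trg u (e # es) v \<longleftrightarrow> e \<in> E \<and> src e = u \<and> walk E src trg (trg e) es v"

definition simple_path :: "'e set \<Rightarrow> ('e \<Rightarrow> 'v) \<Rightarrow> ('e \<Rightarrow> 'v) \<Rightarrow> 'v \<Rightarrow> 'e list \<Rightarrow> 'v \<Rightarrow> bool" where
  "simple_path E src trg u p v \<longleftrightarrow> walk E src trg u p v \<and> distinct (u # map trg p)"

definition acyclic_graph :: "'e set \<Rightarrow> ('e \<Rightarrow> 'v) \<Rightarrow> ('e \<Rightarrow> 'v) \<Rightarrow> bool" where
  "acyclic_graph E src trg \<longleftrightarrow> \<not> (\<exists>u p. p \<noteq> [] \<and> walk E src trg u p u)"

definition paths :: "'e set \<Rightarrow> ('e \<Rightarrow> 'v) \<Rightarrow> ('e \<Rightarrow> 'v) \<Rightarrow> ('i \<Rightarrow> 'v) \<Rightarrow> ('i \<Rightarrow> 'v) \<Rightarrow> 'i \<Rightarrow> 'e list set" where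
  "paths E src trg org dst i = {p. simple_path E src trg (org i) p (dst i)}"

definition load :: "'e set \<Rightarrow> ('e \<Rightarrow> 'v) \<Rightarrow> ('e \<Rightarrow> 'v) \<Rightarrow> 'i set \<Rightarrow> ('i \<Rightarrow> 'v) \<Rightarrow> ('i \<Rightarrow> 'v)
    \<Rightarrow> ('i \<Rightarrow> 'e list \<Rightarrow> real) \<Rightarrow> 'e \<Rightarrow> real" where
  "load E src trg I org dst f e =
     (\<Sum>i\<in>I. \<Sum>p\<in>paths E src trg org dst i. if e \<in> set p then f i p else 0)"

definition path_cost :: "('e \<Rightarrow> real \<Rightarrow> real) \<Rightarrow> ('e \<Rightarrow> real) \<Rightarrow> 'e list \<Rightarrow> real" where
  "path_cost c x p = (\<Sum>e\<leftarrow>p. c e (x e))"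

definition feasible :: "'e set \<Rightarrow> ('e \<Rightarrow> 'v) \<Rightarrow> ('e \<Rightarrow> 'v) \<Rightarrow> 'i set \<Rightarrow> ('i \<Rightarrow> 'v) \<Rightarrow> ('i \<Rightarrow> 'v)
    \<Rightarrow> ('i \<Rightarrow> real) \<Rightarrow> ('i \<Rightarrow> 'e list \<Rightarrow> real) \<Rightarrow> bool" where
  "feasible E src trg I org dst \<mu> f \<longleftrightarrow>
     (\<forall>i\<in>I. \<forall>p\<in>paths E src trg org dst i. 0 \<le> f i p) \<and>
     (\<forall>i\<in>I. (\<Sum>p\<in>paths E src trg org dst i. f i p) = \<mu> i)"

definition wardrop :: "'e set \<Rightarrow> ('e \<Rightarrow> 'v) \<Rightarrow> ('e \<Rightarrow> 'v) \<Rightarrow> 'i set \<Rightarrow> ('i \<Rightarrow> 'v) \<Rightarrow> ('i \<Rightarrow> 'v)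
    \<Rightarrow> ('e \<Rightarrow> real \<Rightarrow> real) \<Rightarrow> ('i \<Rightarrow> real) \<Rightarrow> ('i \<Rightarrow> 'e list \<Rightarrow> real) \<Rightarrow> bool" where
  "wardrop E src trg I org dst c \<mu> f \<longleftrightarrow>
     feasible E src trg I org dst \<mu> f \<and>
     (\<forall>i\<in>I. \<forall>p\<in>paths E src trg org dst i. 0 < f i p \<longrightarrow>
        (\<forall>q\<in>paths E src trg org dst i.
           path_cost c (load E src trg I org dst f) p \<le> path_cost c (load E src trg I org dst f) q))"

definition total_cost :: "'e set \<Rightarrow> ('e \<Rightarrow> 'v) \<Rightarrow> ('e \<Rightarrow> 'v) \<Rightarrow> 'i set \<Rightarrow> ('i \<Rightarrow> 'v) \<Rightarrow> ('i \<Rightarrow> 'v)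
    \<Rightarrow> ('e \<Rightarrow> real \<Rightarrow> real) \<Rightarrow> ('i \<Rightarrow> 'e list \<Rightarrow> real) \<Rightarrow> real" where
  "total_cost E src trg I org dst c f =
     (\<Sum>i\<in>I. \<Sum>p\<in>paths E src trg org dst i. f i p * path_cost c (load E src trg I org dst f) p)"

definition system_optimum :: "'e set \<Rightarrow> ('e \<Rightarrow> 'v) \<Rightarrow> ('e \<Rightarrow> 'v) \<Rightarrow> 'i set \<Rightarrow> ('i \<Rightarrow> 'v) \<Rightarrow> ('i \<Rightarrow> 'v)
    \<Rightarrow> ('e \<Rightarrow> real \<Rightarrow> real) \<Rightarrow> ('i \<Rightarrow> real) \<Rightarrow> ('i \<Rightarrow> 'e list \<Rightarrow> real) \<Rightarrow> bool" where
  "system_optimum E src trg I org dst c \<mu> f \<longleftrightarrow>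
     feasible E src trg I org dst \<mu> f \<and>
     (\<forall>g. feasible E src trg I org dst \<mu> g \<longrightarrow>
        total_cost E src trg I org dst c f \<le> total_cost E src trg I org dst c g)"

definition DIOT :: "'e set \<Rightarrow> ('e \<Rightarrow> 'v) \<Rightarrow> ('e \<Rightarrow> 'v) \<Rightarrow> 'i set \<Rightarrow> ('i \<Rightarrow> 'v) \<Rightarrow> ('i \<Rightarrow> 'v)
    \<Rightarrow> ('e \<Rightarrow> real \<Rightarrow> real) \<Rightarrow> ('e \<Rightarrow> real) \<Rightarrow> bool" where
  "DIOT E src trg I org dst c \<tau> \<longleftrightarrow>
     (\<forall>\<mu>. (\<forall>i\<in>I. 0 \<le> \<mu> i) \<longrightarrow>
       (\<forall>f. wardrop E src trg I org dst (\<lambda>e x. c e x + \<tau> e) \<mu> f \<longrightarrow>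
            system_optimum E src trg I org dst c \<mu> f))"

text \<open>BPR-type cost t_e + a_e x^beta, with the convention x^0 = 1 (also at x = 0).\<close>
definition bpr_cost :: "('e \<Rightarrow> real) \<Rightarrow> ('e \<Rightarrow> real) \<Rightarrow> real \<Rightarrow> 'e \<Rightarrow> real \<Rightarrow> real" where
  "bpr_cost t a \<beta> e x = t e + a e * (if \<beta> = 0 then 1 else x powr \<beta>)"

end

theory Submission
  imports Defs "HOL-Analysis.Analysis"
begin


lemma tangent_pos:
  fixes x y b :: real
  assumes "0 < x" "0 < y" "0 < b"
  shows "(1+b) * x powr b * (y - x) \<le> y powr (1+b) - x powr (1+b)"
proof -
  have "(1+b) * x powr b * (y - x) \<le> y powr (1+b) - x powr (1+b)"
    using assms
    by (intro convex_on_imp_above_tangent[where A = "{0<..}"] powr_convex)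
       (auto intro!: derivative_eq_intros simp: interior_open)
  then show ?thesis .
qed

lemma core_ineq:
  fixes x y b :: real
  assumes "0 \<le> x" "0 \<le> y" "0 < b"
  shows "(1+b) * x powr b * (y - x) \<le> y * y powr b - x * x powr b"
proof (cases "x = 0")
  case True then show ?thesis using assms by simp
next
  case False
  show ?thesis
  proof (cases "y = 0")
    case True
    have "0 \<le> x * x powr b" using assms by simp
    then show ?thesis using True assms by (simp add: algebra_simps)
  next
    case False
    have e: "z * z powr b = z powr (1+b)" if "0 < z" for z :: real
      using that by (simp add: powr_add)
    show ?thesis using tangent_pos[of x y b] assms False \<open>x \<noteq> 0\<close> e[of x] e[of y] by simp
  qed
qed



lemma walk_append: "walk E s d u (p @ q) v \<longleftrightarrow> (\<exists>w. walk E s d u p w \<and> walk E s d w q v)"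
  by (induction p arbitrary: u) auto

lemma walk_set: "walk E s d u p v \<Longrightarrow> set p \<subseteq> E"
  by (induction p arbitrary: u) auto

lemma walk_tele: "walk E s d u p v \<Longrightarrow> sum_list (map (\<lambda>e. pot (d e) - pot (s e)) p) = pot v - (pot u :: real)"
  by (induction p arbitrary: u) auto

lemma walk_notin:
  assumes "acyclic_graph E s d" "walk E s d w p (s e)"
  shows "e \<notin> set p"
proof
  assume "e \<in> set p"
  then obtain p1 p2 where p: "p = p1 @ e # p2" by (meson split_list)
  from assms(2) obtain z where "walk E s d z (e # p2) (s e)" unfolding p walk_append by blast
  then have "walk E s d (s e) (e # p2) (s e)" by auto
  with assms(1) show False unfolding acyclic_graph_def by blast
qed

lemma finite_dlists: "finite E \<Longrightarrow> finite {p. set p \<subseteq> E \<and> distinct p}"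
proof -
  assume f: "finite E"
  have "{p. set p \<subseteq> E \<and> distinct p} \<subseteq> {p. set p \<subseteq> E \<and> length p \<le> card E}"
  proof -
    have "length p \<le> card E" if "set p \<subseteq> E" "distinct p" for p :: "'a list"
      using card_mono[OF f that(1)] distinct_card[OF that(2)] by simp
    then show ?thesis by blast
  qed
  then show ?thesis using finite_lists_length_le[OF f] finite_subset by blast
qed

lemma potential_exists:
  fixes \<delta> :: "'e \<Rightarrow> real"
  assumes "finite E" "acyclic_graph E s d"
  shows "\<exists>\<pi> :: 'v \<Rightarrow> real. \<forall>e\<in>E. \<pi> (s e) + \<delta> e \<le> \<pi> (d e)"
proof -
  define W where "W v = {p. (\<exists>u. walk E s d u p v) \<and> distinct p}" for v
  define \<pi> where "\<pi> v = Max ((\<lambda>p. sum_list (map \<delta> p)) ` W v)" for v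
  have fin: "finite (W v)" for v
  proof (rule finite_subset[OF _ finite_dlists[OF assms(1)]])
    show "W v \<subseteq> {p. set p \<subseteq> E \<and> distinct p}" unfolding W_def by (auto dest: walk_set)
  qed
  have ne: "[] \<in> W v" for v unfolding W_def by auto
  have "\<pi> (s e) + \<delta> e \<le> \<pi> (d e)" if e: "e \<in> E" for e
  proof -
    obtain p where p: "p \<in> W (s e)" "\<pi> (s e) = sum_list (map \<delta> p)"
      using Max_in[of "(\<lambda>p. sum_list (map \<delta> p)) ` W (s e)"] fin ne unfolding \<pi>_def by fastforce
    obtain u where u: "walk E s d u p (s e)" "distinct p" using p(1) unfolding W_def by blast
    have "e \<notin> set p" using walk_notin[OF assms(2) u(1)] .
    moreover have "walk E s d u (p @ [e]) (d e)" using u e by (auto simp: walk_append)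
    ultimately have "p @ [e] \<in> W (d e)" using u unfolding W_def by auto
    then have "sum_list (map \<delta> (p @ [e])) \<in> (\<lambda>p. sum_list (map \<delta> p)) ` W (d e)" by (rule imageI)
    then have "sum_list (map \<delta> (p @ [e])) \<le> \<pi> (d e)"
      unfolding \<pi>_def using fin by (intro Max_ge) auto
    then show ?thesis using p by simp
  qed
  then show ?thesis by blast
qed

lemma paths_props:
  assumes "p \<in> paths E s d org dst i"
  shows "distinct p" "set p \<subseteq> E" "walk E s d (org i) p (dst i)"
  using assms unfolding paths_def Defs.simple_path_def
  by (auto dest: walk_set simp: distinct_map)

lemma paths_finite:
  assumes "finite E" shows "finite (paths E s d org dst i)"
proof (rule finite_subset[OF _ finite_dlists[OF assms]])
  show "paths E s d org dst i \<subseteq> {p. set p \<subseteq> E \<and> distinct p}"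
    using paths_props[of _ E s d org dst i] by blast
qed

lemma exchange:
  fixes w :: "'e \<Rightarrow> real" and h :: "'i \<Rightarrow> 'e list \<Rightarrow> real"
  assumes "finite E" "finite I"
  shows "(\<Sum>i\<in>I. \<Sum>p\<in>paths E s d org dst i. h i p * sum_list (map w p))
       = (\<Sum>e\<in>E. w e * load E s d I org dst h e)"
proof -
  have "(\<Sum>i\<in>I. \<Sum>p\<in>paths E s d org dst i. h i p * sum_list (map w p))
      = (\<Sum>i\<in>I. \<Sum>p\<in>paths E s d org dst i. \<Sum>e\<in>E. w e * (if e \<in> set p then h i p else 0))"
  proof (intro sum.cong refl)
    fix i p assume p: "p \<in> paths E s d org dst i"
    have "sum_list (map w p) = sum w (set p)"
      using paths_props(1)[OF p] by (simp add: sum_list_distinct_conv_sum_set)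
    also have "\<dots> = (\<Sum>e\<in>E. if e \<in> set p then w e else 0)"
      using paths_props(2)[OF p] assms(1) by (simp add: sum.If_cases Int_absorb1 Int_commute)
    finally show "h i p * sum_list (map w p) = (\<Sum>e\<in>E. w e * (if e \<in> set p then h i p else 0))"
      by (auto simp: sum_distrib_left intro!: sum.cong)
  qed
  also have "\<dots> = (\<Sum>i\<in>I. \<Sum>e\<in>E. \<Sum>p\<in>paths E s d org dst i. w e * (if e \<in> set p then h i p else 0))"
    by (rule sum.cong[OF refl], rule sum.swap)
  also have "\<dots> = (\<Sum>e\<in>E. \<Sum>i\<in>I. \<Sum>p\<in>paths E s d org dst i. w e * (if e \<in> set p then h i p else 0))"
    by (rule sum.swap)
  also have "\<dots> = (\<Sum>e\<in>E. w e * load E s d I org dst h e)"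
    unfolding load_def by (simp add: sum_distrib_left)
  finally show ?thesis .
qed

lemma min_arg:
  fixes f g C :: "'p \<Rightarrow> real"
  assumes "finite P" "\<forall>p\<in>P. 0 \<le> f p" "\<forall>p\<in>P. 0 \<le> g p" "sum f P = sum g P"
    "\<forall>p\<in>P. 0 < f p \<longrightarrow> (\<forall>q\<in>P. C p \<le> C q)"
  shows "(\<Sum>p\<in>P. f p * C p) \<le> (\<Sum>p\<in>P. g p * C p)"
proof (cases "P = {}")
  case True then show ?thesis by simp
next
  case False
  define m where "m = Min (C ` P)"
  have "f p * C p = f p * m" if "p \<in> P" for p
  proof (cases "f p > 0")
    case True
    then have "C p \<le> m" using assms(5) that assms(1) False unfolding m_def by (auto simp: Min_ge_iff)
    moreover have "m \<le> C p" unfolding m_def using assms(1) that by simp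
    ultimately show ?thesis by simp
  next
    case False then have "f p = 0" using assms(2) that by force
    then show ?thesis by simp
  qed
  then have "(\<Sum>p\<in>P. f p * C p) = (\<Sum>p\<in>P. f p * m)" by (rule sum.cong[OF refl])
  also have "\<dots> = m * sum f P" by (simp add: sum_distrib_left mult.commute)
  also have "\<dots> = (\<Sum>p\<in>P. g p * m)" using assms(4) by (simp add: sum_distrib_left mult.commute)
  also have "\<dots> \<le> (\<Sum>p\<in>P. g p * C p)"
  proof (rule sum_mono)
    fix p assume "p \<in> P"
    then have "m \<le> C p" unfolding m_def using assms(1) by simp
    then show "g p * m \<le> g p * C p" using assms(3) \<open>p \<in> P\<close> by (simp add: mult_left_mono)
  qed
  finally show ?thesis .
qed


lemma potential_flow:
  fixes pot :: "'v \<Rightarrow> real"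
  assumes "finite E" "finite I" "feasible E s d I org dst \<mu> h"
  shows "(\<Sum>e\<in>E. (pot (d e) - pot (s e)) * load E s d I org dst h e)
       = (\<Sum>i\<in>I. \<mu> i * (pot (dst i) - pot (org i)))"
proof -
  have "(\<Sum>e\<in>E. (pot (d e) - pot (s e)) * load E s d I org dst h e)
     = (\<Sum>i\<in>I. \<Sum>p\<in>paths E s d org dst i. h i p * sum_list (map (\<lambda>e. pot (d e) - pot (s e)) p))"
    by (rule exchange[OF assms(1,2), symmetric])
  also have "\<dots> = (\<Sum>i\<in>I. \<Sum>p\<in>paths E s d org dst i. h i p * (pot (dst i) - pot (org i)))"
    by (intro sum.cong refl) (simp add: walk_tele[OF paths_props(3)])
  also have "\<dots> = (\<Sum>i\<in>I. \<mu> i * (pot (dst i) - pot (org i)))"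
    using assms(3) unfolding feasible_def by (simp add: sum_distrib_right[symmetric])
  finally show ?thesis .
qed

lemma load_nonneg:
  assumes "feasible E s d I org dst \<mu> h"
  shows "0 \<le> load E s d I org dst h e"
  using assms unfolding feasible_def load_def by (auto intro!: sum_nonneg)

theorem theorem6:
  fixes E :: "'e set" and src trg :: "'e \<Rightarrow> 'v"
    and I :: "'i set" and org dst :: "'i \<Rightarrow> 'v"
    and t a :: "'e \<Rightarrow> real" and \<beta> :: real
  assumes "finite E" and "finite I"
    and "acyclic_graph E src trg"
    and "0 \<le> \<beta>"
    and "\<forall>e\<in>E. 0 \<le> t e \<and> 0 \<le> a e"
  shows "\<exists>\<tau> :: 'e \<Rightarrow> real. (\<forall>e\<in>E. 0 \<le> \<tau> e) \<and>
           DIOT E src trg I org dst (bpr_cost t a \<beta>) \<tau>"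
proof -
  define \<delta> where "\<delta> e = \<beta> * t e / (1+\<beta>)" for e
  obtain pot :: "'v \<Rightarrow> real" where pot: "\<forall>e\<in>E. pot (src e) + \<delta> e \<le> pot (trg e)"
    using potential_exists[OF assms(1) assms(3)] by blast
  define \<tau> where "\<tau> e = pot (trg e) - pot (src e) - \<delta> e" for e
  have taunn: "\<forall>e\<in>E. 0 \<le> \<tau> e" using pot by (auto simp: \<tau>_def)
  define c where "c = bpr_cost t a \<beta>"
  define xb where "xb z = (if \<beta> = 0 then 1 else z powr \<beta>)" for z :: real
  define MC where "MC e z = t e + (1+\<beta>) * a e * xb z" for e z
  define PD where "PD e = pot (trg e) - pot (src e)" for e
  have c_eq: "c e z = t e + a e * xb z" for e z by (simp add: c_def bpr_cost_def xb_def)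
  have tolled: "c e z + \<tau> e = MC e z / (1+\<beta>) + PD e" for e z
    using assms(4) by (simp add: c_eq MC_def \<tau>_def \<delta>_def PD_def field_simps)
  have tangent: "MC e x * (y - x) \<le> c e y * y - c e x * x" if "e \<in> E" "0\<le>x" "0\<le>y" for e x y
  proof -
    have "(1+\<beta>) * xb x * (y-x) \<le> y * xb y - x * xb x"
    proof (cases "\<beta> = 0")
      case True then show ?thesis by (simp add: xb_def)
    next
      case False then show ?thesis using core_ineq[of x y \<beta>] that assms(4) by (simp add: xb_def)
    qed
    then have "a e * ((1+\<beta>) * xb x * (y-x)) \<le> a e * (y * xb y - x * xb x)"
      using assms(5) that by (intro mult_left_mono) auto
    then show ?thesis by (simp add: c_eq MC_def algebra_simps)
  qed
  have "DIOT E src trg I org dst c \<tau>"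
    unfolding DIOT_def
  proof (intro allI impI)
    fix \<mu> f assume \<mu>: "\<forall>i\<in>I. 0 \<le> \<mu> i"
      and W: "wardrop E src trg I org dst (\<lambda>e x. c e x + \<tau> e) \<mu> f"
    let ?P = "paths E src trg org dst"
    let ?x = "load E src trg I org dst f"
    have ff: "feasible E src trg I org dst \<mu> f" using W unfolding wardrop_def by blast
    show "system_optimum E src trg I org dst c \<mu> f"
      unfolding system_optimum_def
    proof (intro conjI allI impI ff)
      fix g assume fg: "feasible E src trg I org dst \<mu> g"
      let ?y = "load E src trg I org dst g"
      have xnn: "0 \<le> ?x e" for e using load_nonneg[OF ff] .
      have ynn: "0 \<le> ?y e" for e using load_nonneg[OF fg] .
      define C where "C e = c e (?x e) + \<tau> e" for e
      have pc: "path_cost (\<lambda>e x. c e x + \<tau> e) ?x p = sum_list (map C p)" for p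
        unfolding path_cost_def by (rule arg_cong[where f=sum_list], rule map_cong) (simp_all add: C_def)
      have A: "(\<Sum>i\<in>I. \<Sum>p\<in>?P i. f i p * sum_list (map C p))
             \<le> (\<Sum>i\<in>I. \<Sum>p\<in>?P i. g i p * sum_list (map C p))"
      proof (rule sum_mono)
        fix i assume i: "i \<in> I"
        show "(\<Sum>p\<in>?P i. f i p * sum_list (map C p)) \<le> (\<Sum>p\<in>?P i. g i p * sum_list (map C p))"
          apply (rule min_arg[OF paths_finite[OF assms(1)]])
          using ff fg W i unfolding feasible_def wardrop_def pc by auto
      qed
      hence B: "(\<Sum>e\<in>E. C e * ?x e) \<le> (\<Sum>e\<in>E. C e * ?y e)"
        by (simp only: exchange[OF assms(1,2)])
      have Ce: "C e * z = MC e (?x e) / (1+\<beta>) * z + PD e * z" for e z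
        unfolding C_def tolled by (simp add: algebra_simps)
      have px: "(\<Sum>e\<in>E. PD e * ?x e) = (\<Sum>e\<in>E. PD e * ?y e)"
        unfolding PD_def potential_flow[OF assms(1,2) ff] potential_flow[OF assms(1,2) fg] ..
      from B have "(\<Sum>e\<in>E. MC e (?x e) / (1+\<beta>) * ?x e) \<le> (\<Sum>e\<in>E. MC e (?x e) / (1+\<beta>) * ?y e)"
        unfolding Ce sum.distrib px by simp
      hence "(\<Sum>e\<in>E. MC e (?x e) * ?x e) / (1+\<beta>) \<le> (\<Sum>e\<in>E. MC e (?x e) * ?y e) / (1+\<beta>)"
        by (simp add: sum_divide_distrib)
      hence D: "(\<Sum>e\<in>E. MC e (?x e) * ?x e) \<le> (\<Sum>e\<in>E. MC e (?x e) * ?y e)"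
        using assms(4) by (simp add: divide_le_cancel)
      have tc: "total_cost E src trg I org dst c h = (\<Sum>e\<in>E. c e (load E src trg I org dst h e) * load E src trg I org dst h e)" for h
        unfolding total_cost_def path_cost_def by (rule exchange[OF assms(1,2)])
      have "(\<Sum>e\<in>E. MC e (?x e) * (?y e - ?x e)) \<le> (\<Sum>e\<in>E. c e (?y e) * ?y e - c e (?x e) * ?x e)"
        by (intro sum_mono tangent xnn ynn)
      then show "total_cost E src trg I org dst c f \<le> total_cost E src trg I org dst c g"
        using D unfolding tc by (simp add: sum_subtractf right_diff_distrib)
    qed
  qed
  then show ?thesis using taunn unfolding c_def by blast
qed

end
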